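(* Consider a repeater chain in the model described in the context with $N+2$ nodes labelled $0,1,\dots,N+1$, where the end nodes $0$ and $N+1$ are a distance $L>0$ apart and the $N$ repeater nodes are placed along a line between them. Let $\ell_i>0$ denote the distance between nodes $i$ and $i+1$ for $i=0,\dots,N$, so that $\sum_{i=0}^N\ell_i=L$. Then the entangling rate $R$ of the chain, as a function of $(\ell_0,\dots,\ell_N)$, is maximal when the repeaters are placed equidistantly, i.e. when $\ell_i=L/(N+1)$ for all $i$.
   Context: Repeater-chain model (swap-ASAP, synchronized attempts). The chain has edges between consecutive nodes; edge $i$ has length $\ell_i\ge 0$ (in km). Entanglement generation proceeds in synchronized rounds, each of duration $t_{\mathrm{att}}=\frac1c\max_i\ell_i$ with $c=200{,}000$ km/s. In each round, every edge that has not yet succeeded makes an attempt which succeeds independently with probability $p_i=10^{-\alpha\ell_i/10}$, $\alpha=0.2\ \mathrm{km}^{-1}$. Thus the number of rounds $X_i$ until edge $i$ succeeds is geometric on $\{1,2,\dots\}$ with parameter $p_i$, the $X_i$ are independent, and end-to-end entanglement is complete after time $T_{\mathrm{done}}=t_{\mathrm{att}}\max_iX_i$. The entangling rate is $R=1/\mathbb E[T_{\mathrm{done}}]$. *)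

theory Defs
  imports "HOL-Probability.Probability"
begin

text \<open>Speed of light in fibre (km/s) and attenuation coefficient (1/km).\<close>
definition c_fib :: real where "c_fib = 200000"
definition alpha_att :: real where "alpha_att = 0.2"

definition succ_prob :: "real \<Rightarrow> real" where
  "succ_prob l = 10 powr (- alpha_att * l / 10)"

definition t_att :: "nat \<Rightarrow> (nat \<Rightarrow> real) \<Rightarrow> real" where
  "t_att N ell = Max (ell ` {..N}) / c_fib"

text \<open>Joint law of the numbers of rounds: X i = G i + 1 with G i independent,
  geometric on {0,1,...} with parameter p_i (number of failures before success).\<close>
definition rounds_pmf :: "nat \<Rightarrow> (nat \<Rightarrow> real) \<Rightarrow> (nat \<Rightarrow> nat) pmf" where
  "rounds_pmf N ell = Pi_pmf {..N} 0 (\<lambda>i. map_pmf Suc (geometric_pmf (succ_prob (ell i))))"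

definition T_done :: "nat \<Rightarrow> (nat \<Rightarrow> real) \<Rightarrow> (nat \<Rightarrow> nat) \<Rightarrow> real" where
  "T_done N ell X = t_att N ell * real (Max (X ` {..N}))"

definition ent_rate :: "nat \<Rightarrow> (nat \<Rightarrow> real) \<Rightarrow> real" where
  "ent_rate N ell = 1 / measure_pmf.expectation (rounds_pmf N ell) (T_done N ell)"

end

theory Submission
  imports Defs
begin

lemma ratio_mono:
  fixes y z :: real and k :: nat
  assumes "0 < y" "y \<le> z" "z < 1" "k \<ge> 1"
  shows "y^(k-1)*(1-y)/(1-y^k) \<le> z^(k-1)*(1-z)/(1-z^k)"
proof -
  define S where "S = (\<lambda>x::real. \<Sum>i<k. x^i)"
  have Sy: "1 - y^k = (1-y) * S y" "1 - z^k = (1-z) * S z" unfolding S_def by (rule one_diff_power_eq)+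
  have Spos: "S x > 0" if "x > 0" for x
    unfolding S_def using assms(4) that by (intro sum_pos2[of _ 0]) auto
  have "y^(k-1) * S z \<le> z^(k-1) * S y"
    unfolding S_def sum_distrib_left
  proof (rule sum_mono)
    fix j assume "j \<in> {..<k}"
    hence j: "j \<le> k - 1" by auto
    have kj: "k - 1 = j + (k-1-j)" using j by simp
    have e1: "y^(k-1) = y^j * y^(k-1-j)" "z^(k-1) = z^j * z^(k-1-j)"
      by (subst kj, simp only: power_add)+
    have "y^(k-1-j) \<le> z^(k-1-j)" using assms by (intro power_mono) auto
    hence "y^j * z^j * y^(k-1-j) \<le> y^j * z^j * z^(k-1-j)"
      using assms by (intro mult_left_mono) auto
    thus "y^(k-1) * z^j \<le> z^(k-1) * y^j" unfolding e1 by (simp add: algebra_simps)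
  qed
  hence c: "y^(k-1) / S y \<le> z^(k-1) / S z"
    using Spos[of y] Spos[of z] assms by (simp add: divide_simps mult.commute)
  have "y^(k-1)*(1-y)/(1-y^k) = y^(k-1)*(1-y)/((1-y) * S y)" by (simp only: Sy)
  also have "\<dots> = y^(k-1) / S y" using assms by simp
  also note c
  also have "z^(k-1) / S z = z^(k-1)*(1-z)/((1-z) * S z)" using assms by simp
  also have "\<dots> = z^(k-1)*(1-z)/(1-z^k)" by (simp only: Sy)
  finally show ?thesis .
qed

lemma g_convex:
  fixes a :: real and k :: nat
  assumes a: "a > 0" and k: "k \<ge> 1"
  shows "convex_on {0<..} (\<lambda>l. - ln (1 - (1 - exp (-(a*l)))^k))"
proof (rule convex_on_realI[where f' = "\<lambda>l. a * k * ((1 - exp (-(a*l)))^(k-1) * (1 - (1 - exp (-(a*l)))) / (1 - (1 - exp (-(a*l)))^k))"])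
  show "connected {0::real<..}" by simp
next
  fix x :: real assume "x \<in> {0<..}"
  hence x: "x > 0" by simp
  define Y where "Y = 1 - exp (-(a*x))"
  have Y: "0 < Y" "Y < 1" unfolding Y_def using a x by auto
  have Yk: "Y^k < 1" using Y k by (simp add: power_less_one_iff)
  have "((\<lambda>l. - ln (1 - (1 - exp (-(a*l)))^k)) has_real_derivative
     - ((- (real k * (1 - exp (-(a*x)))^(k-1) * (- (exp (-(a*x)) * (- a))))) / (1 - (1 - exp (-(a*x)))^k))) (at x)"
    using Yk unfolding Y_def by (auto intro!: derivative_eq_intros)
  thus "((\<lambda>l. - ln (1 - (1 - exp (-(a*l)))^k)) has_real_derivative
     a * k * ((1 - exp (-(a*x)))^(k-1) * (1 - (1 - exp (-(a*x)))) / (1 - (1 - exp (-(a*x)))^k))) (at x)"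
    by (simp add: field_simps)
next
  fix x y :: real assume "x \<in> {0<..}" "y \<in> {0<..}" "x \<le> y"
  hence xy: "0 < x" "x \<le> y" by auto
  define Y where "Y = 1 - exp (-(a*x))"
  define Z where "Z = 1 - exp (-(a*y))"
  have "0 < Y" "Y \<le> Z" "Z < 1" unfolding Y_def Z_def using a xy by auto
  from ratio_mono[OF this k]
  have "Y^(k-1)*(1-Y)/(1-Y^k) \<le> Z^(k-1)*(1-Z)/(1-Z^k)" .
  hence "a * k * (Y^(k-1)*(1-Y)/(1-Y^k)) \<le> a * k * (Z^(k-1)*(1-Z)/(1-Z^k))"
    using a by (intro mult_left_mono) auto
  thus "a * k * ((1 - exp (-(a*x)))^(k-1) * (1 - (1 - exp (-(a*x)))) / (1 - (1 - exp (-(a*x)))^k))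
     \<le> a * k * ((1 - exp (-(a*y)))^(k-1) * (1 - (1 - exp (-(a*y)))) / (1 - (1 - exp (-(a*y)))^k))"
    unfolding Y_def Z_def by simp
qed

lemma prod_ineq:
  fixes a L :: real and ell :: "nat \<Rightarrow> real" and N k :: nat
  assumes a: "a > 0" and pos: "\<And>i. i \<le> N \<Longrightarrow> ell i > 0" and sum: "(\<Sum>i\<le>N. ell i) = L"
  shows "(\<Prod>i\<le>N. (1 - (1 - exp (-(a * ell i)))^k)) \<le> (1 - (1 - exp (-(a * (L / real (N+1)))))^k)^(N+1)"
proof (cases "k = 0")
  case True thus ?thesis by simp
next
  case False
  hence k: "k \<ge> 1" by simp
  define g where "g = (\<lambda>l. - ln (1 - (1 - exp (-(a*l)))^k))"
  have gpos: "1 - (1 - exp (-(a*l)))^k > 0" if "l > 0" for l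
  proof -
    have "0 < 1 - exp (-(a*l))" "1 - exp (-(a*l)) < 1" using a that by auto
    thus ?thesis using k by (simp add: power_less_one_iff)
  qed
  have J: "g (\<Sum>i\<le>N. (1 / real (N+1)) *\<^sub>R ell i) \<le> (\<Sum>i\<le>N. (1 / real (N+1)) * g (ell i))"
    by (rule convex_on_sum[OF _ _ g_convex[OF a k, folded g_def]]) (auto intro: pos)
  have E1: "(\<Sum>i\<le>N. (1 / real (N+1)) *\<^sub>R ell i) = L / real (N+1)"
    using sum by (simp add: sum_divide_distrib[symmetric])
  have E2: "(\<Sum>i\<le>N. (1 / real (N+1)) * g (ell i)) = (\<Sum>i\<le>N. g (ell i)) / real (N+1)"
    by (simp add: sum_divide_distrib[symmetric])
  have "g (L / real (N+1)) \<le> (\<Sum>i\<le>N. g (ell i)) / real (N+1)"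
    using J unfolding E1 E2 .
  hence "real (N+1) * g (L / real (N+1)) \<le> (\<Sum>i\<le>N. g (ell i))"
    by (simp only: pos_le_divide_eq of_nat_0_less_iff zero_less_Suc Suc_eq_plus1[symmetric] mult.commute)
  hence "(\<Sum>i\<le>N. ln (1 - (1 - exp (-(a * ell i)))^k)) \<le> real (N+1) * ln (1 - (1 - exp (-(a * (L / real (N+1)))))^k)"
    unfolding g_def by (simp add: sum_negf)
  moreover have "(\<Sum>i\<le>N. ln (1 - (1 - exp (-(a * ell i)))^k)) = ln (\<Prod>i\<le>N. (1 - (1 - exp (-(a * ell i)))^k))"
    using gpos pos by (subst ln_prod) (auto, metis less_irrefl)
  moreover have "L > 0"
  proof -
    have "(\<Sum>i\<le>N. ell i) > 0" using pos by (intro sum_pos) auto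
    thus ?thesis using sum by simp
  qed
  hence "real (N+1) * ln (1 - (1 - exp (-(a * (L / real (N+1)))))^k) = ln ((1 - (1 - exp (-(a * (L / real (N+1)))))^k)^(N+1))"
    using gpos[of "L / real (N+1)"] by (subst ln_realpow) auto
  ultimately have "ln (\<Prod>i\<le>N. (1 - (1 - exp (-(a * ell i)))^k)) \<le> ln ((1 - (1 - exp (-(a * (L / real (N+1)))))^k)^(N+1))"
    by simp
  moreover have "(\<Prod>i\<le>N. (1 - (1 - exp (-(a * ell i)))^k)) > 0" using gpos pos by (intro prod_pos) auto
  moreover have "(1 - (1 - exp (-(a * (L / real (N+1)))))^k)^(N+1) > 0" using gpos[of "L / real (N+1)"] \<open>L > 0\<close> by simp
  ultimately show ?thesis by simp
qed

definition aa :: real where "aa = ln 10 / 50"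

lemma aa_pos: "aa > 0" unfolding aa_def by simp

lemma succ_prob_exp: "succ_prob l = exp (-(aa * l))"
  unfolding succ_prob_def aa_def alpha_att_def powr_def by (simp add: field_simps)

lemma succ_prob_bounds: "l > 0 \<Longrightarrow> 0 < succ_prob l \<and> succ_prob l \<le> 1"
  unfolding succ_prob_exp using aa_pos by simp

lemma geo_cdf:
  assumes "0 < p" "p \<le> 1"
  shows "measure_pmf.prob (map_pmf Suc (geometric_pmf p)) {..k} = 1 - (1-p)^k"
proof -
  have "measure_pmf.prob (map_pmf Suc (geometric_pmf p)) {..k} = measure_pmf.prob (geometric_pmf p) (Suc -` {..k})"
    by (simp add: measure_map_pmf)
  also have "Suc -` {..k} = {..<k}" by auto
  also have "measure_pmf.prob (geometric_pmf p) {..<k} = (\<Sum>n<k. (1-p)^n * p)"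
    using assms by (simp add: measure_measure_pmf_finite)
  also have "\<dots> = 1 - (1-p)^k"
    by (induction k) (auto simp: algebra_simps)
  finally show ?thesis .
qed

lemma cdf_max:
  assumes pos: "\<And>i. i \<le> N \<Longrightarrow> ell i > 0"
  shows "measure_pmf.prob (rounds_pmf N ell) {f. Max (f ` {..N}) \<le> k}
          = (\<Prod>i\<le>N. (1 - (1 - succ_prob (ell i))^k))"
proof -
  have "{f. Max (f ` {..N}) \<le> k} = Pi {..N} (\<lambda>_. {..k})"
    by (auto simp: Pi_def)
  hence "measure_pmf.prob (rounds_pmf N ell) {f. Max (f ` {..N}) \<le> k}
      = (\<Prod>i\<le>N. measure_pmf.prob (map_pmf Suc (geometric_pmf (succ_prob (ell i)))) {..k})"
    unfolding rounds_pmf_def by (simp add: measure_Pi_pmf_Pi)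
  also have "\<dots> = (\<Prod>i\<le>N. (1 - (1 - succ_prob (ell i))^k))"
    using pos succ_prob_bounds by (intro prod.cong refl geo_cdf) auto
  finally show ?thesis .
qed

lemma nn_tail:
  assumes pos: "\<And>i. i \<le> N \<Longrightarrow> ell i > 0"
  shows "(\<integral>\<^sup>+ f. ennreal (real (Max (f ` {..N}))) \<partial>rounds_pmf N ell)
        = (\<Sum>k. ennreal (1 - (\<Prod>i\<le>N. (1 - (1 - succ_prob (ell i))^k))))"
proof -
  have pt: "ennreal (real n) = (\<Sum>k. if k < n then 1 else 0)" for n :: nat
  proof -
    have "(\<Sum>k. if k < n then 1 else 0 :: ennreal) = (\<Sum>k<n. if k < n then 1 else 0)"
      by (rule suminf_finite) auto
    also have "\<dots> = (\<Sum>k<n. 1)" by (intro sum.cong) auto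
    finally show ?thesis by (simp add: ennreal_of_nat_eq_real_of_nat)
  qed
  have "(\<integral>\<^sup>+ f. ennreal (real (Max (f ` {..N}))) \<partial>rounds_pmf N ell)
     = (\<integral>\<^sup>+ f. (\<Sum>k. indicator {f. k < Max (f ` {..N})} f) \<partial>rounds_pmf N ell)"
    by (intro nn_integral_cong, subst pt, simp add: indicator_def of_bool_def)
  also have "\<dots> = (\<Sum>k. \<integral>\<^sup>+ f. indicator {f. k < Max (f ` {..N})} f \<partial>rounds_pmf N ell)"
    by (rule nn_integral_suminf) simp
  also have "\<dots> = (\<Sum>k. ennreal (1 - (\<Prod>i\<le>N. (1 - (1 - succ_prob (ell i))^k))))"
  proof (intro suminf_cong)
    fix k
    have "(\<integral>\<^sup>+ f. indicator {f. k < Max (f ` {..N})} f \<partial>rounds_pmf N ell)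
        = ennreal (measure_pmf.prob (rounds_pmf N ell) {f. k < Max (f ` {..N})})"
      by (simp add: measure_pmf.emeasure_eq_measure)
    also have "measure_pmf.prob (rounds_pmf N ell) {f. k < Max (f ` {..N})} = 1 - measure_pmf.prob (rounds_pmf N ell) {f. Max (f ` {..N}) \<le> k}"
    proof -
      have eq: "{f. k < Max (f ` {..N})} = space (measure_pmf (rounds_pmf N ell)) - {f. Max (f ` {..N}) \<le> k}" by (auto simp: Max_gr_iff; force)
      show ?thesis unfolding eq by (rule measure_pmf.prob_compl) simp
    qed
    also have "measure_pmf.prob (rounds_pmf N ell) {f. Max (f ` {..N}) \<le> k} = (\<Prod>i\<le>N. (1 - (1 - succ_prob (ell i))^k))"
      by (rule cdf_max) (rule pos)
    finally show "(\<integral>\<^sup>+ f. indicator {f. k < Max (f ` {..N})} f \<partial>rounds_pmf N ell)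
        = ennreal (1 - (\<Prod>i\<le>N. (1 - (1 - succ_prob (ell i))^k)))" .
  qed
  finally show ?thesis .
qed

lemma expect_T:
  assumes pos: "\<And>i. i \<le> N \<Longrightarrow> ell i > 0"
  shows "measure_pmf.expectation (rounds_pmf N ell) (T_done N ell)
       = t_att N ell * enn2real (\<integral>\<^sup>+ f. ennreal (real (Max (f ` {..N}))) \<partial>rounds_pmf N ell)"
proof -
  have "measure_pmf.expectation (rounds_pmf N ell) (T_done N ell)
      = t_att N ell * measure_pmf.expectation (rounds_pmf N ell) (\<lambda>f. real (Max (f ` {..N})))"
    unfolding T_done_def by (rule integral_mult_right_zero)
  also have "measure_pmf.expectation (rounds_pmf N ell) (\<lambda>f. real (Max (f ` {..N})))
      = enn2real (\<integral>\<^sup>+ f. ennreal (real (Max (f ` {..N}))) \<partial>rounds_pmf N ell)"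
    by (rule integral_eq_nn_integral) auto
  finally show ?thesis .
qed

theorem mainTheorem2:
  fixes N :: nat and L :: real and ell :: "nat \<Rightarrow> real"
  assumes "L > 0"
    and "\<And>i. i \<le> N \<Longrightarrow> ell i > 0"
    and "(\<Sum>i\<le>N. ell i) = L"
  shows "ent_rate N ell \<le> ent_rate N (\<lambda>_. L / real (N + 1))"
proof -
  define m where "m = L / real (N + 1)"
  have mpos: "m > 0" unfolding m_def using assms(1) by simp
  have pos2: "\<And>i. i \<le> N \<Longrightarrow> (\<lambda>_. m) i > 0" using mpos by simp
  define I1 where "I1 = (\<integral>\<^sup>+ f. ennreal (real (Max (f ` {..N}))) \<partial>rounds_pmf N ell)"
  define I2 where "I2 = (\<integral>\<^sup>+ f. ennreal (real (Max (f ` {..N}))) \<partial>rounds_pmf N (\<lambda>_. m))"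
  have E1: "measure_pmf.expectation (rounds_pmf N ell) (T_done N ell) = t_att N ell * enn2real I1"
    unfolding I1_def by (rule expect_T) (rule assms(2))
  have E2: "measure_pmf.expectation (rounds_pmf N (\<lambda>_. m)) (T_done N (\<lambda>_. m)) = t_att N (\<lambda>_. m) * enn2real I2"
    unfolding I2_def by (rule expect_T) (rule pos2)
  have T1: "I1 = (\<Sum>k. ennreal (1 - (\<Prod>i\<le>N. (1 - (1 - succ_prob (ell i))^k))))"
    unfolding I1_def by (rule nn_tail) (rule assms(2))
  have T2: "I2 = (\<Sum>k. ennreal (1 - (\<Prod>i\<le>N. (1 - (1 - succ_prob m)^k))))"
    unfolding I2_def by (rule nn_tail) (rule pos2)
  have I21: "I2 \<le> I1"
    unfolding T1 T2
  proof (intro suminf_le summableI allI)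
    fix k
    have "(\<Prod>i\<le>N. (1 - (1 - succ_prob (ell i))^k)) \<le> (1 - (1 - succ_prob m)^k)^(N+1)"
      using prod_ineq[OF aa_pos assms(2) assms(3), of k] unfolding succ_prob_exp m_def by simp
    also have "\<dots> = (\<Prod>i\<le>N. (1 - (1 - succ_prob m)^k))" by simp
    finally show "ennreal (1 - (\<Prod>i\<le>N. (1 - (1 - succ_prob m)^k)))
        \<le> ennreal (1 - (\<Prod>i\<le>N. (1 - (1 - succ_prob (ell i))^k)))"
      by (intro ennreal_leI) simp
  qed
  have I2ge: "1 \<le> I2"
  proof -
    have "(\<Sum>k\<in>{0}. ennreal (1 - (\<Prod>i\<le>N. (1 - (1 - succ_prob m)^k)))) \<le> (\<Sum>k. ennreal (1 - (\<Prod>i\<le>N. (1 - (1 - succ_prob m)^k))))"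
      by (intro sum_le_suminf summableI) auto
    thus ?thesis unfolding T2 by simp
  qed
  have t2: "t_att N (\<lambda>_. m) = m / c_fib" unfolding t_att_def by simp
  have cpos: "c_fib > 0" unfolding c_fib_def by simp
  have t1: "t_att N (\<lambda>_. m) \<le> t_att N ell"
  proof -
    have "L \<le> (\<Sum>i\<le>N. Max (ell ` {..N}))"
      unfolding assms(3)[symmetric] by (intro sum_mono) auto
    hence "L \<le> real (N+1) * Max (ell ` {..N})" by simp
    hence "m \<le> Max (ell ` {..N})" unfolding m_def by (simp add: field_simps)
    thus ?thesis unfolding t2 unfolding t_att_def using cpos by (simp add: divide_right_mono)
  qed
  have t2pos: "t_att N (\<lambda>_. m) > 0" unfolding t2 using mpos cpos by simp
  show ?thesis
  proof (cases "I1 = \<top>")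
    case True
    have "ent_rate N ell = 0" unfolding ent_rate_def E1 True by simp
    moreover have "ent_rate N (\<lambda>_. m) \<ge> 0" unfolding ent_rate_def E2 using t2pos by simp
    ultimately show ?thesis unfolding m_def by simp
  next
    case False
    hence fin: "I1 < \<top>" by (simp add: top.not_eq_extremum)
    have x2: "enn2real I2 \<ge> 1" using enn2real_mono[OF I2ge] I21 fin by simp
    have x12: "enn2real I2 \<le> enn2real I1" using enn2real_mono[OF I21 fin] .
    have "t_att N (\<lambda>_. m) * enn2real I2 \<le> t_att N ell * enn2real I1"
      using t1 x12 t2pos x2 by (intro mult_mono) auto
    moreover have "t_att N (\<lambda>_. m) * enn2real I2 > 0" using t2pos x2 by simp
    ultimately have "1 / (t_att N ell * enn2real I1) \<le> 1 / (t_att N (\<lambda>_. m) * enn2real I2)"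
      by (intro divide_left_mono) auto
    thus ?thesis unfolding ent_rate_def E1 E2 m_def[symmetric] .
  qed
qed

end
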